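(* Let $\varphi : X\to X$ be a morphism in $\mathscr{C}$ with kernel $\kappa : K\to X$ and cokernel $\lambda : X\to L$. Then $\varphi$ has a core inverse if and only if $\varphi$ is regular and both $\kappa\lambda : K\to L$ and $\kappa\kappa^{*} : K\to K$ are invertible. In this case, for every $\psi : X\to X$ with $\varphi\psi\varphi=\varphi$, $$\varphi^{\mathrm{core}}=[1_X-\lambda(\kappa\lambda)^{-1}\kappa]\,\psi\,[1_X-\kappa^{*}(\kappa\kappa^{*})^{-1}\kappa].$$
   Context: $\mathscr{C}$ is an additive category with an involution $*$: a map on morphisms sending $\varphi : X\to Y$ to $\varphi^* : Y \to X$ such that $(\varphi^* )^*=\varphi$, $(\varphi\psi)^*=\psi^*\varphi^*$ and $(\varphi+\phi)^*=\varphi^*+\phi^*$. Composition is written left to right: for $\varphi : X\to Y$ and $\psi : Y\to Z$, $\varphi\psi : X \to Z$ means "first $\varphi$, then $\psi$". A kernel of $\varphi : X\to Y$ is a morphism $\kappa : K\to X$ with $\kappa\varphi=0$ such that every $\alpha : M\to X$ with $\alpha\varphi=0$ factors uniquely as $\alpha=\alpha'\kappa$. A cokernel of $\varphi$ is a morphism $\lambda : Y\to L$ with $\varphi\lambda=0$ such that every $\beta : Y\to M$ with $\varphi\beta=0$ factors uniquely as $\beta=\lambda\beta'$. $\varphi$ is regular if there is $\chi$ with $\varphi\chi\varphi=\varphi$. A morphism is invertible if it has a two-sided inverse. For $\varphi : X\to X$, a core inverse of $\varphi$ is a morphism $\chi : X\to X$ with $(\varphi\chi)^*=\varphi\chi$,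 $\varphi\chi^2=\chi$ and $\chi\varphi^2=\varphi$. It is unique when it exists and is denoted $\varphi^{\mathrm{core}}$. *)

theory Defs
  imports Main
begin

text \<open>An additive category with involution, presented through its hom-sets.
  Composition cmp f g is diagrammatic: first f, then g.\<close>

record ('o, 'm) icat =
  Hom   :: "'o \<Rightarrow> 'o \<Rightarrow> 'm set"
  cmp   :: "'m \<Rightarrow> 'm \<Rightarrow> 'm"
  idm   :: "'o \<Rightarrow> 'm"
  zer   :: "'o \<Rightarrow> 'o \<Rightarrow> 'm"
  ad    :: "'m \<Rightarrow> 'm \<Rightarrow> 'm"
  ng    :: "'m \<Rightarrow> 'm"
  invol :: "'m \<Rightarrow> 'm"

locale additive_inv_cat =
  fixes C :: "('o, 'm, 'x) icat_scheme"
  assumes hom_disj: "\<And>f X Y X' Y'. f \<in> Hom C X Y \<Longrightarrow> f \<in> Hom C X' Y' \<Longrightarrow> X = X' \<and> Y = Y'"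
    and cmp_closed: "\<And>f g X Y Z. f \<in> Hom C X Y \<Longrightarrow> g \<in> Hom C Y Z \<Longrightarrow> cmp C f g \<in> Hom C X Z"
    and cmp_assoc: "\<And>f g h X Y Z W. f \<in> Hom C X Y \<Longrightarrow> g \<in> Hom C Y Z \<Longrightarrow> h \<in> Hom C Z W \<Longrightarrow>
                     cmp C (cmp C f g) h = cmp C f (cmp C g h)"
    and idm_closed: "\<And>X. idm C X \<in> Hom C X X"
    and idm_left: "\<And>f X Y. f \<in> Hom C X Y \<Longrightarrow> cmp C (idm C X) f = f"
    and idm_right: "\<And>f X Y. f \<in> Hom C X Y \<Longrightarrow> cmp C f (idm C Y) = f"
    and zer_closed: "\<And>X Y. zer C X Y \<in> Hom C X Y"
    and ad_closed: "\<And>f g X Y. f \<in> Hom C X Y \<Longrightarrow> g \<in> Hom C X Y \<Longrightarrow> ad C f g \<in> Hom C X Y"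
    and ng_closed: "\<And>f X Y. f \<in> Hom C X Y \<Longrightarrow> ng C f \<in> Hom C X Y"
    and ad_assoc: "\<And>f g h X Y. f \<in> Hom C X Y \<Longrightarrow> g \<in> Hom C X Y \<Longrightarrow> h \<in> Hom C X Y \<Longrightarrow>
                     ad C (ad C f g) h = ad C f (ad C g h)"
    and ad_comm: "\<And>f g X Y. f \<in> Hom C X Y \<Longrightarrow> g \<in> Hom C X Y \<Longrightarrow> ad C f g = ad C g f"
    and ad_zer: "\<And>f X Y. f \<in> Hom C X Y \<Longrightarrow> ad C f (zer C X Y) = f"
    and ad_ng: "\<And>f X Y. f \<in> Hom C X Y \<Longrightarrow> ad C f (ng C f) = zer C X Y"
    and cmp_ad_left: "\<And>f g h X Y Z. f \<in> Hom C X Y \<Longrightarrow> g \<in> Hom C X Y \<Longrightarrow> h \<in> Hom C Y Z \<Longrightarrow>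
                     cmp C (ad C f g) h = ad C (cmp C f h) (cmp C g h)"
    and cmp_ad_right: "\<And>f g h X Y Z. f \<in> Hom C X Y \<Longrightarrow> g \<in> Hom C Y Z \<Longrightarrow> h \<in> Hom C Y Z \<Longrightarrow>
                     cmp C f (ad C g h) = ad C (cmp C f g) (cmp C f h)"
    and zero_object: "\<exists>Z. \<forall>X. Hom C Z X = {zer C Z X} \<and> Hom C X Z = {zer C X Z}"
    and biproducts: "\<And>X Y. \<exists>S i1 i2 p1 p2. i1 \<in> Hom C X S \<and> i2 \<in> Hom C Y S \<and>
                       p1 \<in> Hom C S X \<and> p2 \<in> Hom C S Y \<and>
                       cmp C i1 p1 = idm C X \<and> cmp C i2 p2 = idm C Y \<and>
                       cmp C i1 p2 = zer C X Y \<and> cmp C i2 p1 = zer C Y X \<and>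
                       ad C (cmp C p1 i1) (cmp C p2 i2) = idm C S"
    and invol_closed: "\<And>f X Y. f \<in> Hom C X Y \<Longrightarrow> invol C f \<in> Hom C Y X"
    and invol_invol: "\<And>f X Y. f \<in> Hom C X Y \<Longrightarrow> invol C (invol C f) = f"
    and invol_cmp: "\<And>f g X Y Z. f \<in> Hom C X Y \<Longrightarrow> g \<in> Hom C Y Z \<Longrightarrow>
                     invol C (cmp C f g) = cmp C (invol C g) (invol C f)"
    and invol_ad: "\<And>f g X Y. f \<in> Hom C X Y \<Longrightarrow> g \<in> Hom C X Y \<Longrightarrow>
                     invol C (ad C f g) = ad C (invol C f) (invol C g)"

definition is_kernel :: "('o, 'm, 'x) icat_scheme \<Rightarrow> 'm \<Rightarrow> 'o \<Rightarrow> 'o \<Rightarrow> 'm \<Rightarrow> 'o \<Rightarrow> bool" where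
  "is_kernel C \<phi> X Y \<kappa> K \<longleftrightarrow> \<kappa> \<in> Hom C K X \<and> cmp C \<kappa> \<phi> = zer C K Y \<and>
     (\<forall>M \<alpha>. \<alpha> \<in> Hom C M X \<and> cmp C \<alpha> \<phi> = zer C M Y \<longrightarrow>
        (\<exists>!\<alpha>'. \<alpha>' \<in> Hom C M K \<and> \<alpha> = cmp C \<alpha>' \<kappa>))"

definition is_cokernel :: "('o, 'm, 'x) icat_scheme \<Rightarrow> 'm \<Rightarrow> 'o \<Rightarrow> 'o \<Rightarrow> 'm \<Rightarrow> 'o \<Rightarrow> bool" where
  "is_cokernel C \<phi> X Y lam L \<longleftrightarrow> lam \<in> Hom C Y L \<and> cmp C \<phi> lam = zer C X L \<and>
     (\<forall>M \<beta>. \<beta> \<in> Hom C Y M \<and> cmp C \<phi> \<beta> = zer C X M \<longrightarrow>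
        (\<exists>!\<beta>'. \<beta>' \<in> Hom C L M \<and> \<beta> = cmp C lam \<beta>'))"

definition regular :: "('o, 'm, 'x) icat_scheme \<Rightarrow> 'o \<Rightarrow> 'o \<Rightarrow> 'm \<Rightarrow> bool" where
  "regular C X Y \<phi> \<longleftrightarrow> (\<exists>\<chi> \<in> Hom C Y X. cmp C (cmp C \<phi> \<chi>) \<phi> = \<phi>)"

definition invertible_mor :: "('o, 'm, 'x) icat_scheme \<Rightarrow> 'o \<Rightarrow> 'o \<Rightarrow> 'm \<Rightarrow> bool" where
  "invertible_mor C X Y f \<longleftrightarrow> f \<in> Hom C X Y \<and>
     (\<exists>g \<in> Hom C Y X. cmp C f g = idm C X \<and> cmp C g f = idm C Y)"

definition inv_mor :: "('o, 'm, 'x) icat_scheme \<Rightarrow> 'o \<Rightarrow> 'o \<Rightarrow> 'm \<Rightarrow> 'm" where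
  "inv_mor C X Y f = (THE g. g \<in> Hom C Y X \<and> cmp C f g = idm C X \<and> cmp C g f = idm C Y)"

definition core_inverse :: "('o, 'm, 'x) icat_scheme \<Rightarrow> 'o \<Rightarrow> 'm \<Rightarrow> 'm \<Rightarrow> bool" where
  "core_inverse C X \<phi> \<chi> \<longleftrightarrow> \<chi> \<in> Hom C X X \<and>
     invol C (cmp C \<phi> \<chi>) = cmp C \<phi> \<chi> \<and>
     cmp C \<phi> (cmp C \<chi> \<chi>) = \<chi> \<and>
     cmp C \<chi> (cmp C \<phi> \<phi>) = \<phi>"

definition core :: "('o, 'm, 'x) icat_scheme \<Rightarrow> 'o \<Rightarrow> 'm \<Rightarrow> 'm" where
  "core C X \<phi> = (THE \<chi>. core_inverse C X \<phi> \<chi>)"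

definition sub_mor :: "('o, 'm, 'x) icat_scheme \<Rightarrow> 'm \<Rightarrow> 'm \<Rightarrow> 'm" where
  "sub_mor C f g = ad C f (ng C g)"

end

theory Submission
  imports Defs
begin

definition arr :: "('o, 'm, 'x) icat_scheme \<Rightarrow> 'm \<Rightarrow> bool" where
  "arr C f \<longleftrightarrow> (\<exists>X Y. f \<in> Hom C X Y)"
definition dm :: "('o, 'm, 'x) icat_scheme \<Rightarrow> 'm \<Rightarrow> 'o" where
  "dm C f = (THE X. \<exists>Y. f \<in> Hom C X Y)"
definition cd :: "('o, 'm, 'x) icat_scheme \<Rightarrow> 'm \<Rightarrow> 'o" where
  "cd C f = (THE Y. \<exists>X. f \<in> Hom C X Y)"

context additive_inv_cat begin

lemma homI: "f \<in> Hom C X Y \<Longrightarrow> arr C f \<and> dm C f = X \<and> cd C f = Y"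
  unfolding arr_def dm_def cd_def
  by (auto intro!: the_equality dest: hom_disj)

lemma arrD: "arr C f \<Longrightarrow> f \<in> Hom C (dm C f) (cd C f)"
  using homI unfolding arr_def by blast

lemma arrI: "arr C f \<Longrightarrow> dm C f = X \<Longrightarrow> cd C f = Y \<Longrightarrow> f \<in> Hom C X Y"
  using arrD by blast

lemma add_cancel:
  assumes "a \<in> Hom C X Y" "b \<in> Hom C X Y" "c \<in> Hom C X Y" "ad C a b = ad C a c"
  shows "b = c"
proof -
  have z: "\<And>f. f \<in> Hom C X Y \<Longrightarrow> ad C (zer C X Y) f = f"
    by (metis ad_comm ad_zer zer_closed)
  have n: "ad C (ng C a) a = zer C X Y" by (metis ad_comm ad_ng ng_closed assms(1))
  have "b = ad C (ad C (ng C a) a) b" using z n assms by simp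
  also have "\<dots> = ad C (ng C a) (ad C a b)" using ad_assoc ng_closed assms by blast
  also have "\<dots> = ad C (ad C (ng C a) a) c" using ad_assoc ng_closed assms by (metis (no_types))
  also have "\<dots> = c" using z n assms by simp
  finally show ?thesis .
qed

lemma neg_unique:
  assumes "a \<in> Hom C X Y" "b \<in> Hom C X Y" "ad C a b = zer C X Y"
  shows "b = ng C a"
  using add_cancel[OF assms(1,2) ng_closed[OF assms(1)]] assms ad_ng by metis

lemma cmp_zer_right: "f \<in> Hom C X Y \<Longrightarrow> cmp C f (zer C Y Z) = zer C X Z"
proof -
  assume f: "f \<in> Hom C X Y"
  let ?z = "cmp C f (zer C Y Z)"
  have zc: "?z \<in> Hom C X Z" using cmp_closed f zer_closed by blast
  have "ad C ?z ?z = cmp C f (ad C (zer C Y Z) (zer C Y Z))"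
    using cmp_ad_right f zer_closed by metis
  also have "\<dots> = ?z" using ad_zer zer_closed by metis
  also have "\<dots> = ad C ?z (zer C X Z)" using ad_zer zc by metis
  finally show ?thesis using add_cancel zc zer_closed by blast
qed

lemma cmp_zer_left: "f \<in> Hom C Y Z \<Longrightarrow> cmp C (zer C X Y) f = zer C X Z"
proof -
  assume f: "f \<in> Hom C Y Z"
  let ?z = "cmp C (zer C X Y) f"
  have zc: "?z \<in> Hom C X Z" using cmp_closed f zer_closed by blast
  have "ad C ?z ?z = cmp C (ad C (zer C X Y) (zer C X Y)) f"
    using cmp_ad_left f zer_closed by metis
  also have "\<dots> = ?z" using ad_zer zer_closed by metis
  also have "\<dots> = ad C ?z (zer C X Z)" using ad_zer zc by metis
  finally show ?thesis using add_cancel zc zer_closed by blast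
qed

lemma cmp_ng_right: "f \<in> Hom C X Y \<Longrightarrow> g \<in> Hom C Y Z \<Longrightarrow> cmp C f (ng C g) = ng C (cmp C f g)"
proof -
  assume f: "f \<in> Hom C X Y" and g: "g \<in> Hom C Y Z"
  have "ad C (cmp C f g) (cmp C f (ng C g)) = cmp C f (ad C g (ng C g))"
    using cmp_ad_right f g ng_closed by metis
  also have "\<dots> = zer C X Z" using ad_ng g cmp_zer_right f by metis
  finally show ?thesis using neg_unique cmp_closed f g ng_closed by metis
qed

lemma cmp_ng_left: "f \<in> Hom C X Y \<Longrightarrow> g \<in> Hom C Y Z \<Longrightarrow> cmp C (ng C f) g = ng C (cmp C f g)"
proof -
  assume f: "f \<in> Hom C X Y" and g: "g \<in> Hom C Y Z"
  have "ad C (cmp C f g) (cmp C (ng C f) g) = cmp C (ad C f (ng C f)) g"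
    using cmp_ad_left f g ng_closed by metis
  also have "\<dots> = zer C X Z" using ad_ng f cmp_zer_left g by metis
  finally show ?thesis using neg_unique cmp_closed f g ng_closed by metis
qed

lemma invol_zer: "invol C (zer C X Y) = zer C Y X"
proof -
  let ?z = "invol C (zer C X Y)"
  have zc: "?z \<in> Hom C Y X" using invol_closed zer_closed by blast
  have "ad C ?z ?z = invol C (ad C (zer C X Y) (zer C X Y))" using invol_ad zer_closed by metis
  also have "\<dots> = ?z" using ad_zer zer_closed by metis
  also have "\<dots> = ad C ?z (zer C Y X)" using ad_zer zc by metis
  finally show ?thesis using add_cancel zc zer_closed by blast
qed

lemma invol_ng: "f \<in> Hom C X Y \<Longrightarrow> invol C (ng C f) = ng C (invol C f)"
proof -
  assume f: "f \<in> Hom C X Y"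
  have "ad C (invol C f) (invol C (ng C f)) = invol C (ad C f (ng C f))"
    using invol_ad f ng_closed by metis
  also have "\<dots> = zer C Y X" using ad_ng f invol_zer by metis
  finally show ?thesis using neg_unique invol_closed f ng_closed by metis
qed

lemma invol_idm: "invol C (idm C X) = idm C X"
proof -
  have i: "invol C (idm C X) \<in> Hom C X X" using invol_closed idm_closed by blast
  have "invol C (idm C X) = cmp C (invol C (idm C X)) (invol C (invol C (idm C X)))"
    using idm_right i invol_invol idm_closed by metis
  also have "\<dots> = invol C (cmp C (invol C (idm C X)) (idm C X))"
    using invol_cmp i idm_closed by metis
  also have "\<dots> = idm C X" using idm_right i invol_invol idm_closed by metis
  finally show ?thesis .
qed

lemma ng_ng: "f \<in> Hom C X Y \<Longrightarrow> ng C (ng C f) = f"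
  by (metis ad_comm ad_ng neg_unique ng_closed)

lemma sub_closed: "f \<in> Hom C X Y \<Longrightarrow> g \<in> Hom C X Y \<Longrightarrow> sub_mor C f g \<in> Hom C X Y"
  unfolding sub_mor_def using ad_closed ng_closed by blast

lemma sub_self: "f \<in> Hom C X Y \<Longrightarrow> sub_mor C f f = zer C X Y"
  unfolding sub_mor_def using ad_ng by blast

lemma sub_zer: "f \<in> Hom C X Y \<Longrightarrow> sub_mor C f (zer C X Y) = f"
proof -
  assume f: "f \<in> Hom C X Y"
  have "ng C (zer C X Y) = zer C X Y" using neg_unique ad_zer zer_closed by metis
  thus ?thesis unfolding sub_mor_def using ad_zer f by simp
qed

lemma sub_eq: "f \<in> Hom C X Y \<Longrightarrow> g \<in> Hom C X Y \<Longrightarrow> sub_mor C f g = zer C X Y \<Longrightarrow> f = g"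
  unfolding sub_mor_def by (metis neg_unique ng_ng ng_closed)

lemma invol_sub: "f \<in> Hom C X Y \<Longrightarrow> g \<in> Hom C X Y \<Longrightarrow>
   invol C (sub_mor C f g) = sub_mor C (invol C f) (invol C g)"
  unfolding sub_mor_def by (metis invol_ad invol_ng ng_closed)

lemma cmp_sub_right: "f \<in> Hom C X Y \<Longrightarrow> g \<in> Hom C Y Z \<Longrightarrow> h \<in> Hom C Y Z \<Longrightarrow>
   cmp C f (sub_mor C g h) = sub_mor C (cmp C f g) (cmp C f h)"
  unfolding sub_mor_def by (metis cmp_ad_right cmp_ng_right ng_closed)

lemma cmp_sub_left: "f \<in> Hom C X Y \<Longrightarrow> g \<in> Hom C X Y \<Longrightarrow> h \<in> Hom C Y Z \<Longrightarrow>
   cmp C (sub_mor C f g) h = sub_mor C (cmp C f h) (cmp C g h)"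
  unfolding sub_mor_def by (metis cmp_ad_left cmp_ng_left ng_closed)


lemma hom_simps: "f \<in> Hom C X Y \<Longrightarrow> arr C f \<and> dm C f = X \<and> cd C f = Y" by (rule homI)

lemma arr_cmp[simp]: "arr C f \<Longrightarrow> arr C g \<Longrightarrow> cd C f = dm C g \<Longrightarrow>
   arr C (cmp C f g) \<and> dm C (cmp C f g) = dm C f \<and> cd C (cmp C f g) = cd C g"
proof -
  assume a: "arr C f" "arr C g" "cd C f = dm C g"
  have "cmp C f g \<in> Hom C (dm C f) (cd C g)"
    using cmp_closed[of f "dm C f" "cd C f" g "cd C g"] arrD[OF a(1)] arrD[OF a(2)] a(3) by simp
  thus ?thesis using homI by blast
qed

lemma arr_idm[simp]: "arr C (idm C X) \<and> dm C (idm C X) = X \<and> cd C (idm C X) = X"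
  using homI idm_closed by metis
lemma arr_zer[simp]: "arr C (zer C X Y) \<and> dm C (zer C X Y) = X \<and> cd C (zer C X Y) = Y"
  using homI zer_closed by metis
lemma arr_invol[simp]: "arr C f \<Longrightarrow> arr C (invol C f) \<and> dm C (invol C f) = cd C f \<and> cd C (invol C f) = dm C f"
  using homI[OF invol_closed[OF arrD]] by simp
lemma arr_sub[simp]: "arr C f \<Longrightarrow> arr C g \<Longrightarrow> dm C f = dm C g \<Longrightarrow> cd C f = cd C g \<Longrightarrow>
   arr C (sub_mor C f g) \<and> dm C (sub_mor C f g) = dm C f \<and> cd C (sub_mor C f g) = cd C f"
proof -
  assume a: "arr C f" "arr C g" "dm C f = dm C g" "cd C f = cd C g"
  have "sub_mor C f g \<in> Hom C (dm C f) (cd C f)"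
    using sub_closed[of f "dm C f" "cd C f" g] arrD[OF a(1)] arrD[OF a(2)] a(3,4) by simp
  thus ?thesis using homI by blast
qed

lemma assoc[simp]: "arr C f \<Longrightarrow> arr C g \<Longrightarrow> arr C h \<Longrightarrow> cd C f = dm C g \<Longrightarrow> cd C g = dm C h \<Longrightarrow>
   cmp C (cmp C f g) h = cmp C f (cmp C g h)"
proof -
  assume a: "arr C f" "arr C g" "arr C h" "cd C f = dm C g" "cd C g = dm C h"
  show ?thesis
    using cmp_assoc[of f "dm C f" "cd C f" g "cd C g" h "cd C h"] arrD[OF a(1)] arrD[OF a(2)] arrD[OF a(3)] a(4,5)
    by simp
qed

lemma idl[simp]: "arr C f \<Longrightarrow> dm C f = X \<Longrightarrow> cmp C (idm C X) f = f"
  using idm_left[OF arrD] by blast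
lemma idr[simp]: "arr C f \<Longrightarrow> cd C f = X \<Longrightarrow> cmp C f (idm C X) = f"
  using idm_right[OF arrD] by blast
lemma zl[simp]: "arr C f \<Longrightarrow> dm C f = Y \<Longrightarrow> cmp C (zer C X Y) f = zer C X (cd C f)"
  using cmp_zer_left[OF arrD] by blast
lemma zr[simp]: "arr C f \<Longrightarrow> cd C f = Y \<Longrightarrow> cmp C f (zer C Y Z) = zer C (dm C f) Z"
  using cmp_zer_right[OF arrD] by blast
lemma invol_cmp'[simp]: "arr C f \<Longrightarrow> arr C g \<Longrightarrow> cd C f = dm C g \<Longrightarrow>
   invol C (cmp C f g) = cmp C (invol C g) (invol C f)"
proof -
  assume a: "arr C f" "arr C g" "cd C f = dm C g"
  show ?thesis using invol_cmp[of f "dm C f" "cd C f" g "cd C g"] arrD[OF a(1)] arrD[OF a(2)] a(3) by simp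
qed
lemma invol_invol'[simp]: "arr C f \<Longrightarrow> invol C (invol C f) = f"
  using invol_invol[OF arrD] by blast
lemma invol_sub'[simp]: "arr C f \<Longrightarrow> arr C g \<Longrightarrow> dm C f = dm C g \<Longrightarrow> cd C f = cd C g \<Longrightarrow>
   invol C (sub_mor C f g) = sub_mor C (invol C f) (invol C g)"
proof -
  assume a: "arr C f" "arr C g" "dm C f = dm C g" "cd C f = cd C g"
  show ?thesis using invol_sub[of f "dm C f" "cd C f" g] arrD[OF a(1)] arrD[OF a(2)] a(3,4) by simp
qed
declare invol_idm[simp] invol_zer[simp]
lemma csr[simp]: "arr C f \<Longrightarrow> arr C g \<Longrightarrow> arr C h \<Longrightarrow> cd C f = dm C g \<Longrightarrow> dm C g = dm C h \<Longrightarrow> cd C g = cd C h \<Longrightarrow>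
   cmp C f (sub_mor C g h) = sub_mor C (cmp C f g) (cmp C f h)"
proof -
  assume a: "arr C f" "arr C g" "arr C h" "cd C f = dm C g" "dm C g = dm C h" "cd C g = cd C h"
  show ?thesis using cmp_sub_right[of f "dm C f" "cd C f" g "cd C g" h] arrD[OF a(1)] arrD[OF a(2)] arrD[OF a(3)] a(4-6)
    by simp
qed
lemma csl[simp]: "arr C f \<Longrightarrow> arr C g \<Longrightarrow> arr C h \<Longrightarrow> cd C f = dm C h \<Longrightarrow> dm C f = dm C g \<Longrightarrow> cd C f = cd C g \<Longrightarrow>
   cmp C (sub_mor C f g) h = sub_mor C (cmp C f h) (cmp C g h)"
proof -
  assume a: "arr C f" "arr C g" "arr C h" "cd C f = dm C h" "dm C f = dm C g" "cd C f = cd C g"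
  show ?thesis using cmp_sub_left[of f "dm C f" "cd C f" g h "cd C h"] arrD[OF a(1)] arrD[OF a(2)] arrD[OF a(3)] a(4-6)
    by simp
qed
lemma sub_self'[simp]: "arr C f \<Longrightarrow> sub_mor C f f = zer C (dm C f) (cd C f)"
  using sub_self[OF arrD] by blast
lemma sub_zer'[simp]: "arr C f \<Longrightarrow> dm C f = X \<Longrightarrow> cd C f = Y \<Longrightarrow> sub_mor C f (zer C X Y) = f"
  using sub_zer[OF arrD] by blast
lemma sub_eq': "arr C f \<Longrightarrow> arr C g \<Longrightarrow> dm C f = dm C g \<Longrightarrow> cd C f = cd C g \<Longrightarrow>
   sub_mor C f g = zer C X Y \<Longrightarrow> f = g"
proof -
  assume a: "arr C f" "arr C g" "dm C f = dm C g" "cd C f = cd C g" "sub_mor C f g = zer C X Y"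
  have "X = dm C f \<and> Y = cd C f" using arr_sub[OF a(1-4)] a(5) arr_zer[of X Y] by metis
  thus ?thesis using sub_eq[of f "dm C f" "cd C f" g] arrD[OF a(1)] arrD[OF a(2)] a by simp
qed

lemma reassoc2: "cmp C f g = k \<Longrightarrow> arr C f \<Longrightarrow> arr C g \<Longrightarrow> cd C f = dm C g \<Longrightarrow> arr C h \<Longrightarrow> cd C g = dm C h \<Longrightarrow>
   cmp C f (cmp C g h) = cmp C k h"
  by (hypsubst, simp)
lemma reassoc3: "cmp C f (cmp C g h) = k \<Longrightarrow> arr C f \<Longrightarrow> arr C g \<Longrightarrow> arr C h \<Longrightarrow> cd C f = dm C g \<Longrightarrow>
   cd C g = dm C h \<Longrightarrow> arr C j \<Longrightarrow> cd C h = dm C j \<Longrightarrow>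
   cmp C f (cmp C g (cmp C h j)) = cmp C k j"
  by (hypsubst, simp)

lemma ker_factor: "is_kernel C \<phi> X Y \<kappa> K \<Longrightarrow> \<alpha> \<in> Hom C M X \<Longrightarrow> cmp C \<alpha> \<phi> = zer C M Y \<Longrightarrow>
   \<exists>a \<in> Hom C M K. \<alpha> = cmp C a \<kappa>"
  unfolding is_kernel_def by blast
lemma ker_monic: assumes "is_kernel C \<phi> X Y \<kappa> K" "\<phi> \<in> Hom C X Y" "a \<in> Hom C M K" "b \<in> Hom C M K"
  "cmp C a \<kappa> = cmp C b \<kappa>" shows "a = b"
proof -
  have k: "\<kappa> \<in> Hom C K X" "cmp C \<kappa> \<phi> = zer C K Y" using assms(1) unfolding is_kernel_def by auto
  have "cmp C (cmp C a \<kappa>) \<phi> = cmp C a (cmp C \<kappa> \<phi>)"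
    using cmp_assoc[OF assms(3) k(1) assms(2)] .
  also have "\<dots> = zer C M Y" using k(2) cmp_zer_right[OF assms(3)] by simp
  finally have z: "cmp C (cmp C a \<kappa>) \<phi> = zer C M Y" .
  have "cmp C a \<kappa> \<in> Hom C M X" using cmp_closed[OF assms(3) k(1)] .
  then have "\<exists>!a'. a' \<in> Hom C M K \<and> cmp C a \<kappa> = cmp C a' \<kappa>"
    using assms(1) z unfolding is_kernel_def by blast
  thus ?thesis using assms(3,4,5) by blast
qed
lemma coker_factor: "is_cokernel C \<phi> X Y l L \<Longrightarrow> \<beta> \<in> Hom C Y M \<Longrightarrow> cmp C \<phi> \<beta> = zer C X M \<Longrightarrow>
   \<exists>b \<in> Hom C L M. \<beta> = cmp C l b"
  unfolding is_cokernel_def by blast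
lemma coker_epic: assumes "is_cokernel C \<phi> X Y l L" "\<phi> \<in> Hom C X Y" "a \<in> Hom C L M" "b \<in> Hom C L M"
  "cmp C l a = cmp C l b" shows "a = b"
proof -
  have k: "l \<in> Hom C Y L" "cmp C \<phi> l = zer C X L" using assms(1) unfolding is_cokernel_def by auto
  have "cmp C \<phi> (cmp C l a) = cmp C (cmp C \<phi> l) a"
    using cmp_assoc[OF assms(2) k(1) assms(3)] by simp
  also have "\<dots> = zer C X M" using k(2) cmp_zer_left[OF assms(3)] by simp
  finally have z: "cmp C \<phi> (cmp C l a) = zer C X M" .
  have "cmp C l a \<in> Hom C Y M" using cmp_closed[OF k(1) assms(3)] .
  then have "\<exists>!a'. a' \<in> Hom C L M \<and> cmp C l a = cmp C l a'"
    using assms(1) z unfolding is_cokernel_def by blast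
  thus ?thesis using assms(3,4,5) by blast
qed

end

context additive_inv_cat begin

lemma backward:
  assumes phi: "\<phi> \<in> Hom C X X" and ker: "is_kernel C \<phi> X X \<kappa> K" and coker: "is_cokernel C \<phi> X X l L"
    and psi: "\<psi> \<in> Hom C X X" and psir: "cmp C (cmp C \<phi> \<psi>) \<phi> = \<phi>"
    and u: "u \<in> Hom C L K" "cmp C (cmp C \<kappa> l) u = idm C K" "cmp C u (cmp C \<kappa> l) = idm C L"
    and v: "v \<in> Hom C K K" "cmp C (cmp C \<kappa> (invol C \<kappa>)) v = idm C K"
           "cmp C v (cmp C \<kappa> (invol C \<kappa>)) = idm C K"
  shows "core_inverse C X \<phi> (cmp C (cmp C (sub_mor C (idm C X) (cmp C (cmp C l u) \<kappa>)) \<psi>)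
            (sub_mor C (idm C X) (cmp C (cmp C (invol C \<kappa>) v) \<kappa>)))"
proof -
  have k: "\<kappa> \<in> Hom C K X" "cmp C \<kappa> \<phi> = zer C K X" using ker unfolding is_kernel_def by auto
  have lk: "l \<in> Hom C X L" "cmp C \<phi> l = zer C X L" using coker unfolding is_cokernel_def by auto
  note [simp] = hom_simps[OF phi] hom_simps[OF k(1)] hom_simps[OF lk(1)] hom_simps[OF psi]
     hom_simps[OF u(1)] hom_simps[OF v(1)] k(2) lk(2)
  have psir': "cmp C \<phi> (cmp C \<psi> \<phi>) = \<phi>" using psir by simp
  have u2: "cmp C \<kappa> (cmp C l u) = idm C K" using u(2) by simp
  have u3: "cmp C u (cmp C \<kappa> l) = idm C L" using u(3) by simp
  have v2: "cmp C \<kappa> (cmp C (invol C \<kappa>) v) = idm C K" using v(2) by simp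
  have v3: "cmp C v (cmp C \<kappa> (invol C \<kappa>)) = idm C K" using v(3) by simp
  have i1: "cmp C (invol C v) (cmp C \<kappa> (invol C \<kappa>)) = idm C K"
    using arg_cong[OF v2, of "invol C"] by simp
  have "invol C v = cmp C (invol C v) (cmp C \<kappa> (cmp C (invol C \<kappa>) v))" using v2 by simp
  also have "\<dots> = v" using reassoc3[OF i1] by simp
  finally have vs[simp]: "invol C v = v" .
  define E where "E = sub_mor C (idm C X) (cmp C l (cmp C u \<kappa>))"
  define F where "F = sub_mor C (idm C X) (cmp C (invol C \<kappa>) (cmp C v \<kappa>))"
  have Et[simp]: "arr C E" "dm C E = X" "cd C E = X" unfolding E_def by simp_all
  have Ft[simp]: "arr C F" "dm C F = X" "cd C F = X" unfolding F_def by simp_all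
  have kE[simp]: "cmp C \<kappa> E = zer C K X" unfolding E_def using reassoc3[OF u2] by simp
  have El[simp]: "cmp C E l = zer C X L" unfolding E_def using u3 by simp
  have pE[simp]: "cmp C \<phi> E = \<phi>" unfolding E_def using reassoc2[OF lk(2)] by simp
  have kF[simp]: "cmp C \<kappa> F = zer C K X" unfolding F_def using reassoc3[OF v2] by simp
  have Fp[simp]: "cmp C F \<phi> = \<phi>" unfolding F_def by simp
  have Fs[simp]: "invol C F = F" unfolding F_def by simp
  have Ep[simp]: "cmp C E \<phi> = \<phi>" unfolding E_def by simp
  have FE[simp]: "cmp C F E = E" unfolding F_def by simp
  have "cmp C (sub_mor C (idm C X) (cmp C \<phi> \<psi>)) \<phi> = zer C X X" using psir' by simp
  then obtain a where a: "a \<in> Hom C X K" "sub_mor C (idm C X) (cmp C \<phi> \<psi>) = cmp C a \<kappa>"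
    using ker_factor[OF ker] sub_closed[OF idm_closed cmp_closed[OF phi psi]] by blast
  note [simp] = hom_simps[OF a(1)]
  have "cmp C (sub_mor C (idm C X) (cmp C \<phi> \<psi>)) F = zer C X X" using a(2) by simp
  then have sF: "sub_mor C F (cmp C \<phi> (cmp C \<psi> F)) = zer C X X" by simp
  have pF[simp]: "cmp C \<phi> (cmp C \<psi> F) = F"
    by (rule sym, rule sub_eq'[where X=X and Y=X]) (simp_all add: sF)
  have "cmp C \<phi> (sub_mor C (idm C X) (cmp C \<psi> \<phi>)) = zer C X X" using psir' by simp
  then obtain b where b: "b \<in> Hom C L X" "sub_mor C (idm C X) (cmp C \<psi> \<phi>) = cmp C l b"
    using coker_factor[OF coker] sub_closed[OF idm_closed cmp_closed[OF psi phi]] by blast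
  note [simp] = hom_simps[OF b(1)]
  have "cmp C E (sub_mor C (idm C X) (cmp C \<psi> \<phi>)) = zer C X X" using b(2) reassoc2[OF El] by simp
  then have sE: "sub_mor C E (cmp C E (cmp C \<psi> \<phi>)) = zer C X X" by simp
  have Epp: "cmp C E (cmp C \<psi> \<phi>) = E"
    by (rule sym, rule sub_eq'[where X=X and Y=X]) (simp_all add: sE)
  define \<chi> where "\<chi> = cmp C E (cmp C \<psi> F)"
  have chi_eq: "cmp C (cmp C (sub_mor C (idm C X) (cmp C (cmp C l u) \<kappa>)) \<psi>)
            (sub_mor C (idm C X) (cmp C (cmp C (invol C \<kappa>) v) \<kappa>)) = \<chi>"
    unfolding \<chi>_def E_def F_def by simp
  have ct[simp]: "arr C \<chi>" "dm C \<chi> = X" "cd C \<chi> = X" unfolding \<chi>_def by simp_all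
  have pc[simp]: "cmp C \<phi> \<chi> = F" unfolding \<chi>_def using reassoc2[OF pE] by simp
  have c1: "invol C (cmp C \<phi> \<chi>) = cmp C \<phi> \<chi>" by simp
  have "cmp C \<phi> (cmp C \<chi> \<chi>) = cmp C F \<chi>" using reassoc2[OF pc] by simp
  also have "\<dots> = \<chi>" unfolding \<chi>_def using reassoc2[OF FE] by simp
  finally have c2: "cmp C \<phi> (cmp C \<chi> \<chi>) = \<chi>" .
  have c3: "cmp C \<chi> (cmp C \<phi> \<phi>) = \<phi>"
    unfolding \<chi>_def using reassoc2[OF Fp] reassoc3[OF Epp] by simp
  show ?thesis unfolding chi_eq core_inverse_def using c1 c2 c3 arrI[OF ct] by blast
qed


lemma proj_eq:
  assumes "arr C p" "arr C q" "cd C q = dm C p" "cd C p = dm C q" "invol C p = p" "invol C q = q"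
    "cmp C q p = p" "cmp C p q = q"
  shows "p = q"
proof -
  have "invol C (cmp C q p) = cmp C (invol C p) (invol C q)" by (rule invol_cmp') (use assms in auto)
  thus ?thesis using assms by simp
qed

lemma core_unique:
  assumes phi: "\<phi> \<in> Hom C X X" and x: "core_inverse C X \<phi> x" and y: "core_inverse C X \<phi> y"
  shows "x = y"
proof -
  note [simp] = hom_simps[OF phi]
  have xh: "x \<in> Hom C X X" and c1x: "invol C (cmp C \<phi> x) = cmp C \<phi> x" and c2x: "cmp C \<phi> (cmp C x x) = x"
    and c3x: "cmp C x (cmp C \<phi> \<phi>) = \<phi>" using x unfolding core_inverse_def by auto
  have yh: "y \<in> Hom C X X" and c1y: "invol C (cmp C \<phi> y) = cmp C \<phi> y" and c2y: "cmp C \<phi> (cmp C y y) = y"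
    and c3y: "cmp C y (cmp C \<phi> \<phi>) = \<phi>" using y unfolding core_inverse_def by auto
  note [simp] = hom_simps[OF xh] hom_simps[OF yh]
  have Ax: "cmp C \<phi> (cmp C x \<phi>) = \<phi>"
  proof -
    have "cmp C \<phi> (cmp C x \<phi>) = cmp C \<phi> (cmp C x (cmp C x (cmp C \<phi> \<phi>)))" by (simp add: c3x)
    also have "\<dots> = cmp C x (cmp C \<phi> \<phi>)" using reassoc3[OF c2x] by simp
    finally show ?thesis using c3x by simp
  qed
  have Ay: "cmp C \<phi> (cmp C y \<phi>) = \<phi>"
  proof -
    have "cmp C \<phi> (cmp C y \<phi>) = cmp C \<phi> (cmp C y (cmp C y (cmp C \<phi> \<phi>)))" by (simp add: c3y)
    also have "\<dots> = cmp C y (cmp C \<phi> \<phi>)" using reassoc3[OF c2y] by simp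
    finally show ?thesis using c3y by simp
  qed
  have Bx: "cmp C x (cmp C \<phi> x) = x"
  proof -
    have "cmp C x (cmp C \<phi> x) = cmp C x (cmp C \<phi> (cmp C \<phi> (cmp C x x)))" by (simp add: c2x)
    also have "\<dots> = cmp C \<phi> (cmp C x x)" using reassoc3[OF c3x] by simp
    finally show ?thesis using c2x by simp
  qed
  have By: "cmp C y (cmp C \<phi> y) = y"
  proof -
    have "cmp C y (cmp C \<phi> y) = cmp C y (cmp C \<phi> (cmp C \<phi> (cmp C y y)))" by (simp add: c2y)
    also have "\<dots> = cmp C \<phi> (cmp C y y)" using reassoc3[OF c3y] by simp
    finally show ?thesis using c2y by simp
  qed
  have pxy: "cmp C \<phi> x = cmp C \<phi> y"
  proof (rule proj_eq)
    show "invol C (cmp C \<phi> x) = cmp C \<phi> x" by (rule c1x)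
    show "invol C (cmp C \<phi> y) = cmp C \<phi> y" by (rule c1y)
    show "cmp C (cmp C \<phi> y) (cmp C \<phi> x) = cmp C \<phi> x" using reassoc3[OF Ay] by simp
    show "cmp C (cmp C \<phi> x) (cmp C \<phi> y) = cmp C \<phi> y" using reassoc3[OF Ax] by simp
  qed simp_all
  have xpyp: "cmp C x \<phi> = cmp C y \<phi>"
  proof -
    have "cmp C x \<phi> = cmp C \<phi> (cmp C x (cmp C x \<phi>))" using reassoc3[OF c2x] by simp
    also have "\<dots> = cmp C y (cmp C \<phi> (cmp C \<phi> (cmp C x (cmp C x \<phi>))))" using reassoc3[OF c3y] by simp
    also have "\<dots> = cmp C y (cmp C \<phi> (cmp C x \<phi>))" using reassoc3[OF c2x] by simp
    also have "\<dots> = cmp C y \<phi>" using Ax by simp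
    finally show ?thesis .
  qed
  have "x = cmp C x (cmp C \<phi> x)" using Bx by simp
  also have "\<dots> = cmp C x (cmp C \<phi> y)" using pxy by simp
  also have "\<dots> = cmp C y (cmp C \<phi> y)" using reassoc2[OF xpyp] by simp
  also have "\<dots> = y" by (rule By)
  finally show ?thesis .
qed

lemma core_eq: "\<phi> \<in> Hom C X X \<Longrightarrow> core_inverse C X \<phi> x \<Longrightarrow> core C X \<phi> = x"
  unfolding core_def using core_unique by blast

lemma inv_mor_props:
  assumes "invertible_mor C X Y f"
  shows "inv_mor C X Y f \<in> Hom C Y X \<and> cmp C f (inv_mor C X Y f) = idm C X \<and> cmp C (inv_mor C X Y f) f = idm C Y"
proof -
  have f: "f \<in> Hom C X Y" using assms unfolding invertible_mor_def by blast
  have uniq: "g = g'" if "g \<in> Hom C Y X" "cmp C f g = idm C X" "cmp C g f = idm C Y"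
      "g' \<in> Hom C Y X" "cmp C f g' = idm C X" "cmp C g' f = idm C Y" for g g'
  proof -
    have "g = cmp C g (cmp C f g')" using that idm_right by metis
    also have "\<dots> = cmp C (cmp C g f) g'" using cmp_assoc that f by metis
    also have "\<dots> = g'" using that idm_left by metis
    finally show ?thesis .
  qed
  show ?thesis unfolding inv_mor_def
    by (rule theI') (use assms uniq in \<open>auto simp: invertible_mor_def\<close>)
qed

lemma forward:
  assumes phi: "\<phi> \<in> Hom C X X" and ker: "is_kernel C \<phi> X X \<kappa> K" and coker: "is_cokernel C \<phi> X X l L"
    and co: "core_inverse C X \<phi> \<chi>"
  shows "regular C X X \<phi> \<and> invertible_mor C K L (cmp C \<kappa> l) \<and> invertible_mor C K K (cmp C \<kappa> (invol C \<kappa>))"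
proof -
  have k: "\<kappa> \<in> Hom C K X" "cmp C \<kappa> \<phi> = zer C K X" using ker unfolding is_kernel_def by auto
  have lk: "l \<in> Hom C X L" "cmp C \<phi> l = zer C X L" using coker unfolding is_cokernel_def by auto
  have xh: "\<chi> \<in> Hom C X X" and c1: "invol C (cmp C \<phi> \<chi>) = cmp C \<phi> \<chi>" and c2: "cmp C \<phi> (cmp C \<chi> \<chi>) = \<chi>"
    and c3: "cmp C \<chi> (cmp C \<phi> \<phi>) = \<phi>" using co unfolding core_inverse_def by auto
  note [simp] = hom_simps[OF phi] hom_simps[OF k(1)] hom_simps[OF lk(1)] hom_simps[OF xh] k(2) lk(2)
  have A: "cmp C \<phi> (cmp C \<chi> \<phi>) = \<phi>"
  proof -
    have "cmp C \<phi> (cmp C \<chi> \<phi>) = cmp C \<phi> (cmp C \<chi> (cmp C \<chi> (cmp C \<phi> \<phi>)))" by (simp add: c3)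
    also have "\<dots> = cmp C \<chi> (cmp C \<phi> \<phi>)" using reassoc3[OF c2] by simp
    finally show ?thesis using c3 by simp
  qed
  have reg: "regular C X X \<phi>" unfolding regular_def by (rule bexI[OF _ xh]) (simp add: A)
  have kcp: "cmp C \<kappa> (cmp C \<chi> \<phi>) = zer C K X"
  proof -
    have "cmp C \<kappa> (cmp C \<chi> \<phi>) = cmp C \<kappa> (cmp C \<phi> (cmp C \<chi> (cmp C \<chi> \<phi>)))" using reassoc3[OF c2] by simp
    also have "\<dots> = zer C K X" using reassoc2[OF k(2)] by simp
    finally show ?thesis .
  qed
  define e where "e = sub_mor C (idm C X) (cmp C \<chi> \<phi>)"
  have et[simp]: "arr C e" "dm C e = X" "cd C e = X" unfolding e_def by simp_all
  have eh: "e \<in> Hom C X X" using arrI by simp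
  have "cmp C e \<phi> = zer C X X" unfolding e_def using c3 by simp
  then obtain a where a: "a \<in> Hom C X K" "e = cmp C a \<kappa>" using ker_factor[OF ker eh] by blast
  have "cmp C \<phi> e = zer C X X" unfolding e_def using A by simp
  then obtain b where b: "b \<in> Hom C L X" "e = cmp C l b" using coker_factor[OF coker eh] by blast
  note [simp] = hom_simps[OF a(1)] hom_simps[OF b(1)]
  have ak[simp]: "cmp C a \<kappa> = e" using a(2) by simp
  have lb[simp]: "cmp C l b = e" using b(2) by simp
  have ke[simp]: "cmp C \<kappa> e = \<kappa>" unfolding e_def using kcp by simp
  have el[simp]: "cmp C e l = l" unfolding e_def by simp
  have ka: "cmp C \<kappa> a = idm C K"
    by (rule ker_monic[OF ker phi, where M=K]) (simp_all add: arrI)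
  have bl: "cmp C b l = idm C L"
    by (rule coker_epic[OF coker phi, where M=L]) (simp_all add: arrI reassoc2[OF lb])
  have inv1: "invertible_mor C K L (cmp C \<kappa> l)"
    unfolding invertible_mor_def
  proof (intro conjI bexI)
    show "cmp C \<kappa> l \<in> Hom C K L" by (simp add: arrI)
    show "cmp C b a \<in> Hom C L K" by (simp add: arrI)
    show "cmp C (cmp C \<kappa> l) (cmp C b a) = idm C K"
      using reassoc2[OF lb] reassoc2[OF ke] ka by simp
    show "cmp C (cmp C b a) (cmp C \<kappa> l) = idm C L"
      using reassoc2[OF ak] bl by simp
  qed
  define d where "d = sub_mor C (idm C X) (cmp C \<phi> \<chi>)"
  have dt[simp]: "arr C d" "dm C d = X" "cd C d = X" unfolding d_def by simp_all
  have dh: "d \<in> Hom C X X" using arrI by simp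
  have "cmp C d \<phi> = zer C X X" unfolding d_def using A by simp
  then obtain c where c: "c \<in> Hom C X K" "d = cmp C c \<kappa>" using ker_factor[OF ker dh] by blast
  note [simp] = hom_simps[OF c(1)]
  have ck[simp]: "cmp C c \<kappa> = d" using c(2) by simp
  have kd[simp]: "cmp C \<kappa> d = \<kappa>" unfolding d_def using reassoc2[OF k(2)] by simp
  have ds[simp]: "invol C d = d" unfolding d_def using c1 by simp
  have kc: "cmp C \<kappa> c = idm C K"
    by (rule ker_monic[OF ker phi, where M=K]) (simp_all add: arrI)
  have f1: "cmp C (invol C \<kappa>) (invol C c) = d" using arg_cong[OF ck, of "invol C"] by (simp del: ck)
  have f2: "cmp C d (invol C \<kappa>) = invol C \<kappa>" using arg_cong[OF kd, of "invol C"] by (simp del: kd)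
  have f3: "cmp C (invol C c) (invol C \<kappa>) = idm C K" using arg_cong[OF kc, of "invol C"] by simp
  have inv2: "invertible_mor C K K (cmp C \<kappa> (invol C \<kappa>))"
    unfolding invertible_mor_def
  proof (intro conjI bexI)
    show "cmp C \<kappa> (invol C \<kappa>) \<in> Hom C K K" by (simp add: arrI)
    show "cmp C (invol C c) c \<in> Hom C K K" by (simp add: arrI)
    show "cmp C (cmp C \<kappa> (invol C \<kappa>)) (cmp C (invol C c) c) = idm C K"
      using reassoc2[OF f1] reassoc2[OF kd] kc by simp
    show "cmp C (cmp C (invol C c) c) (cmp C \<kappa> (invol C \<kappa>)) = idm C K"
      using reassoc2[OF ck] f2 f3 by simp
  qed
  show ?thesis using reg inv1 inv2 by blast
qed

end

theorem theorem3p3: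
  assumes "additive_inv_cat C"
    and "\<phi> \<in> Hom C X X"
    and "is_kernel C \<phi> X X \<kappa> K"
    and "is_cokernel C \<phi> X X lam L"
  shows "((\<exists>\<chi>. core_inverse C X \<phi> \<chi>) \<longleftrightarrow>
            regular C X X \<phi> \<and> invertible_mor C K L (cmp C \<kappa> lam) \<and>
            invertible_mor C K K (cmp C \<kappa> (invol C \<kappa>)))
       \<and> ((\<exists>\<chi>. core_inverse C X \<phi> \<chi>) \<longrightarrow>
            (\<forall>\<psi> \<in> Hom C X X. cmp C (cmp C \<phi> \<psi>) \<phi> = \<phi> \<longrightarrow>
               core C X \<phi> =
                 cmp C (cmp C (sub_mor C (idm C X) (cmp C (cmp C lam (inv_mor C K L (cmp C \<kappa> lam))) \<kappa>))
                              \<psi>)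
                       (sub_mor C (idm C X) (cmp C (cmp C (invol C \<kappa>) (inv_mor C K K (cmp C \<kappa> (invol C \<kappa>)))) \<kappa>))))"
proof -
  interpret additive_inv_cat C by (rule assms(1))
  have formula: "core_inverse C X \<phi>
      (cmp C (cmp C (sub_mor C (idm C X) (cmp C (cmp C lam (inv_mor C K L (cmp C \<kappa> lam))) \<kappa>)) \<psi>)
         (sub_mor C (idm C X) (cmp C (cmp C (invol C \<kappa>) (inv_mor C K K (cmp C \<kappa> (invol C \<kappa>)))) \<kappa>)))"
    if inv1: "invertible_mor C K L (cmp C \<kappa> lam)" and inv2: "invertible_mor C K K (cmp C \<kappa> (invol C \<kappa>))"
      and psi: "\<psi> \<in> Hom C X X" "cmp C (cmp C \<phi> \<psi>) \<phi> = \<phi>" for \<psi>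
  proof -
    note u = inv_mor_props[OF inv1] and v = inv_mor_props[OF inv2]
    show ?thesis
      using backward[OF assms(2,3,4) psi] u v by blast
  qed
  have fwd: "regular C X X \<phi> \<and> invertible_mor C K L (cmp C \<kappa> lam) \<and>
            invertible_mor C K K (cmp C \<kappa> (invol C \<kappa>))" if "\<exists>\<chi>. core_inverse C X \<phi> \<chi>"
    using that forward[OF assms(2,3,4)] by blast
  have bwd: "\<exists>\<chi>. core_inverse C X \<phi> \<chi>" if h: "regular C X X \<phi>" "invertible_mor C K L (cmp C \<kappa> lam)"
            "invertible_mor C K K (cmp C \<kappa> (invol C \<kappa>))"
  proof -
    obtain \<psi> where "\<psi> \<in> Hom C X X" "cmp C (cmp C \<phi> \<psi>) \<phi> = \<phi>" using h(1) unfolding regular_def by blast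
    thus ?thesis using formula[OF h(2,3)] by blast
  qed
  show ?thesis
  proof (intro conjI impI ballI)
    show "(\<exists>\<chi>. core_inverse C X \<phi> \<chi>) = (regular C X X \<phi> \<and> invertible_mor C K L (cmp C \<kappa> lam) \<and>
            invertible_mor C K K (cmp C \<kappa> (invol C \<kappa>)))" using fwd bwd by blast
  next
    fix \<psi> assume ex: "\<exists>\<chi>. core_inverse C X \<phi> \<chi>" and psi: "\<psi> \<in> Hom C X X" "cmp C (cmp C \<phi> \<psi>) \<phi> = \<phi>"
    show "core C X \<phi> =
                 cmp C (cmp C (sub_mor C (idm C X) (cmp C (cmp C lam (inv_mor C K L (cmp C \<kappa> lam))) \<kappa>))
                              \<psi>)
                       (sub_mor C (idm C X) (cmp C (cmp C (invol C \<kappa>) (inv_mor C K K (cmp C \<kappa> (invol C \<kappa>)))) \<kappa>))"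
      using core_eq[OF assms(2) formula] fwd[OF ex] psi by blast
  qed
qed

end
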